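(* Consider the following game over slots $1,\dots,T$ with $N\ge2$ users. The BS chooses a pmf $\mathbf p$ and in every slot, independently, schedules user $i$ with probability $p_i$. The adversary chooses a blocking matrix $\sigma\in\{0,1\}^{N\times T}$, where $\sigma_i(t)=0$ means user $i$ is blocked in slot $t$. Feasibility means $\sum_{i,t}(1-\sigma_i(t))\le\alpha T$ and at most one user is blocked per slot, where $0<\alpha<1$. Ages satisfy $a_i(1)=1$ and $a_i(t+1)=1$ if user $i$ is scheduled and not blocked in slot $t$, and $a_i(t+1)=a_i(t)+1$ otherwise. The payoff is $\Delta^{\mathbf p,\sigma}=\frac1T\sum_{t=1}^T\frac1N\sum_i\mathbb E[a_i(t)]$. Let $\bar{\mathbf p}$ be the uniform pmf ($p_i=\frac1N$). Let $\bar\sigma$ block one arbitrary user exactly in the slots $\frac{(1-\alpha)T}{2}+1,\dots,\frac{(1+\alpha)T}2$ and nothing else. Then, for all sufficiently large $T$ with $\alpha T\in\mathbb Z$ and $(1-\alpha)T$ even, $(\bar{\mathbf p},\bar\sigma)$ is a Stackelberg equilibrium with the BS as leader. That is: - $\bar\sigma$ maximizes $\Delta^{\bar{\mathbf p},\sigma}$ over feasible $\sigma$; and - $\bar{\mathbf p}$ minimizes $\max_{\sigma\text{ feasible}}\Delta^{\mathbf p,\sigma}$ over all pmfs $\mathbf p$. *)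

theory Defs
  imports "HOL-Probability.Probability"
begin

text \<open>Users are 0,...,N-1; slots are 1,...,T.
  A schedule u maps each slot t to the scheduled user u t.
  A blocking matrix is sigma :: nat => nat => bool, where sigma i t = True
  means sigma_i(t) = 1 (not blocked) and False means user i is blocked in slot t.\<close>

fun age :: "(nat \<Rightarrow> nat) \<Rightarrow> (nat \<Rightarrow> nat \<Rightarrow> bool) \<Rightarrow> nat \<Rightarrow> nat \<Rightarrow> nat" where
  "age u \<sigma> i 0 = 1"
| "age u \<sigma> i (Suc 0) = 1"
| "age u \<sigma> i (Suc (Suc t)) =
     (if u (Suc t) = i \<and> \<sigma> i (Suc t) then 1 else age u \<sigma> i (Suc t) + 1)"

definition sched :: "nat \<Rightarrow> nat pmf \<Rightarrow> (nat \<Rightarrow> nat) pmf" where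
  "sched T p = Pi_pmf {1..T} 0 (\<lambda>_. p)"

definition payoff :: "nat \<Rightarrow> nat \<Rightarrow> nat pmf \<Rightarrow> (nat \<Rightarrow> nat \<Rightarrow> bool) \<Rightarrow> real" where
  "payoff N T p \<sigma> =
     (1 / real T) * (\<Sum>t=1..T. (1 / real N) *
        (\<Sum>i<N. measure_pmf.expectation (sched T p) (\<lambda>u. real (age u \<sigma> i t))))"

definition feasible :: "nat \<Rightarrow> nat \<Rightarrow> real \<Rightarrow> (nat \<Rightarrow> nat \<Rightarrow> bool) \<Rightarrow> bool" where
  "feasible N T \<alpha> \<sigma> \<longleftrightarrow>
     real (card {(i, t). i < N \<and> t \<in> {1..T} \<and> \<not> \<sigma> i t}) \<le> \<alpha> * real T
   \<and> (\<forall>t\<in>{1..T}. card {i. i < N \<and> \<not> \<sigma> i t} \<le> 1)"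

definition worst_payoff :: "nat \<Rightarrow> nat \<Rightarrow> real \<Rightarrow> nat pmf \<Rightarrow> real" where
  "worst_payoff N T \<alpha> p = Sup {payoff N T p \<sigma> | \<sigma>. feasible N T \<alpha> \<sigma>}"

definition uniform_pmf :: "nat \<Rightarrow> nat pmf" where
  "uniform_pmf N = pmf_of_set {..<N}"

definition sigma_bar :: "nat \<Rightarrow> real \<Rightarrow> nat \<Rightarrow> nat \<Rightarrow> nat \<Rightarrow> bool" where
  "sigma_bar T \<alpha> j i t \<longleftrightarrow>
     \<not> (i = j \<and> (1 - \<alpha>) * real T / 2 + 1 \<le> real t \<and> real t \<le> (1 + \<alpha>) * real T / 2)"

end

theory Submission
  imports Defs
begin


definition G :: "real \<Rightarrow> nat set \<Rightarrow> nat \<Rightarrow> real" where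
  "G q B T = (\<Sum>t\<in>{1..T}. \<Sum>a\<in>{1..t}. q ^ card ({a..<t} - B))"

definition nd :: "nat \<Rightarrow> nat \<Rightarrow> nat" where
  "nd a b = (if a \<le> b then b - a else a - b)"

definition phi :: "nat \<Rightarrow> nat set \<Rightarrow> nat \<Rightarrow> nat" where
  "phi M B c = card (({1..M} - B) \<inter> {1..c})"

lemma nd_sym: "nd a b = nd b a" unfolding nd_def by auto

lemma phi_mono: "c \<le> c' \<Longrightarrow> phi M B c \<le> phi M B c'"
  unfolding phi_def by (intro card_mono) auto

lemma G_cut:
  assumes "B \<subseteq> {1..M}"
  shows "G q B (Suc M) = (\<Sum>c'\<in>{0..M}. \<Sum>c\<in>{0..c'}. q ^ nd (phi M B c) (phi M B c'))"
proof -
  have "G q B (Suc M) = (\<Sum>c'\<in>{0..M}. \<Sum>a\<in>{1..Suc c'}. q ^ card ({a..<Suc c'} - B))"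
    unfolding G_def by (subst sum.shift_bounds_cl_Suc_ivl[symmetric]) simp
  also have "\<dots> = (\<Sum>c'\<in>{0..M}. \<Sum>c\<in>{0..c'}. q ^ card ({Suc c..<Suc c'} - B))"
    by (subst sum.shift_bounds_cl_Suc_ivl[symmetric]) simp
  also have "\<dots> = (\<Sum>c'\<in>{0..M}. \<Sum>c\<in>{0..c'}. q ^ nd (phi M B c) (phi M B c'))"
  proof (intro sum.cong refl)
    fix c' c assume c': "c' \<in> {0..M}" and c: "c \<in> {0..c'}"
    have sub: "({1..M} - B) \<inter> {1..c} \<subseteq> ({1..M} - B) \<inter> {1..c'}" using c by auto
    have eq: "{Suc c..<Suc c'} - B = (({1..M} - B) \<inter> {1..c'}) - (({1..M} - B) \<inter> {1..c})"
      using c c' by auto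
    have "card ({Suc c..<Suc c'} - B) = phi M B c' - phi M B c"
      unfolding eq phi_def by (rule card_Diff_subset) (use sub in auto)
    moreover have "phi M B c \<le> phi M B c'" using c by (intro phi_mono) auto
    ultimately show "q ^ card ({Suc c..<Suc c'} - B) = q ^ nd (phi M B c) (phi M B c')"
      unfolding nd_def by simp
  qed
  finally show ?thesis .
qed

lemma sym_sum:
  fixes f :: "nat \<Rightarrow> nat \<Rightarrow> real"
  assumes "\<And>x y. f x y = f y x"
  shows "(\<Sum>c\<in>{0..n}. \<Sum>c'\<in>{0..n}. f c c') = 2 * (\<Sum>c'\<in>{0..n}. \<Sum>c\<in>{0..c'}. f c c') - (\<Sum>c\<in>{0..n}. f c c)"
proof (induction n)
  case 0
  then show ?case by simp
next
  case (Suc n)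
  have "(\<Sum>c\<in>{0..Suc n}. \<Sum>c'\<in>{0..Suc n}. f c c') =
        (\<Sum>c\<in>{0..n}. \<Sum>c'\<in>{0..n}. f c c') + (\<Sum>c\<in>{0..n}. f c (Suc n)) + (\<Sum>c'\<in>{0..n}. f (Suc n) c') + f (Suc n) (Suc n)"
    by (simp add: sum.distrib)
  also have "(\<Sum>c'\<in>{0..n}. f (Suc n) c') = (\<Sum>c\<in>{0..n}. f c (Suc n))"
    using assms by simp
  finally show ?case using Suc by simp
qed

lemma phi_bij:
  assumes "B \<subseteq> {1..M}"
  shows "bij_betw (phi M B) ({0..M} - B) {0..M - card B}"
proof -
  have fB: "finite B" by (rule finite_subset[OF assms]) simp
  have cE: "card ({1..M} - B) = M - card B" using assms fB by (simp add: card_Diff_subset)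
  have B0: "B \<subseteq> {0..M}" using assms by auto
  have cBs: "card ({0..M} - B) = Suc M - card B" using B0 fB
    by (simp add: card_Diff_subset)
  have inj: "inj_on (phi M B) ({0..M} - B)"
  proof (rule linorder_inj_onI')
    fix i j assume i: "i \<in> {0..M} - B" and j: "j \<in> {0..M} - B" and ij: "i < j"
    have j1: "j \<in> ({1..M} - B) \<inter> {1..j}" "j \<notin> ({1..M} - B) \<inter> {1..i}"
      using i j ij by auto
    have "({1..M} - B) \<inter> {1..i} \<subseteq> ({1..M} - B) \<inter> {1..j}"
      using ij by auto
    then have "({1..M} - B) \<inter> {1..i} \<subset> ({1..M} - B) \<inter> {1..j}"
      using j1 by blast
    then have "card (({1..M} - B) \<inter> {1..i}) < card (({1..M} - B) \<inter> {1..j})"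
      by (intro psubset_card_mono) auto
    then show "phi M B i \<noteq> phi M B j" unfolding phi_def by simp
  qed
  have img: "phi M B ` ({0..M} - B) \<subseteq> {0..M - card B}"
  proof
    fix x assume "x \<in> phi M B ` ({0..M} - B)"
    then obtain c where "x = phi M B c" by auto
    then have "x \<le> card ({1..M} - B)" unfolding phi_def
      using card_mono[of "{1..M} - B" "({1..M} - B) \<inter> {1..c}"] by auto
    then show "x \<in> {0..M - card B}" using cE by auto
  qed
  have "card (phi M B ` ({0..M} - B)) = card {0..M - card B}"
  proof -
    have "card B \<le> card {1..M}" using assms by (intro card_mono) auto
    then have "card B \<le> M" by simp
    then show ?thesis using card_image[OF inj] cBs by simp
  qed
  then have "phi M B ` ({0..M} - B) = {0..M - card B}"
    using img by (intro card_subset_eq) auto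
  then show ?thesis using inj unfolding bij_betw_def by auto
qed

definition K :: "real \<Rightarrow> nat \<Rightarrow> real" where
  "K q e = (\<Sum>k\<in>{0..e}. \<Sum>l\<in>{0..e}. q ^ nd k l)"
definition r :: "real \<Rightarrow> nat \<Rightarrow> nat \<Rightarrow> real" where
  "r q e k = (\<Sum>l\<in>{0..e}. q ^ nd k l)"

lemma W_decomp:
  assumes "B \<subseteq> {1..M}"
  shows "(\<Sum>c\<in>{0..M}. \<Sum>c'\<in>{0..M}. q ^ nd (phi M B c) (phi M B c')) =
     K q (M - card B) + 2 * (\<Sum>c\<in>B. r q (M - card B) (phi M B c))
     + (\<Sum>c\<in>B. \<Sum>c'\<in>B. q ^ nd (phi M B c) (phi M B c'))"
proof -
  define Bs where "Bs = {0..M} - B"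
  define e where "e = M - card B"
  define h where "h = (\<lambda>c c'. q ^ nd (phi M B c) (phi M B c'))"
  have fB: "finite B" by (rule finite_subset[OF assms]) simp
  have C: "{0..M} = Bs \<union> B" "Bs \<inter> B = {}" "finite Bs" using assms unfolding Bs_def by auto
  have bij: "bij_betw (phi M B) Bs {0..e}" unfolding Bs_def e_def by (rule phi_bij[OF assms])
  have inner: "(\<Sum>c'\<in>Bs. q ^ nd k (phi M B c')) = r q e k" for k
    unfolding r_def using sum.reindex_bij_betw[OF bij, of "\<lambda>l. q ^ nd k l"] by simp
  have "(\<Sum>c\<in>{0..M}. \<Sum>c'\<in>{0..M}. h c c') =
        (\<Sum>c\<in>Bs. \<Sum>c'\<in>Bs. h c c') + (\<Sum>c\<in>Bs. \<Sum>c'\<in>B. h c c') + ((\<Sum>c\<in>B. \<Sum>c'\<in>Bs. h c c') + (\<Sum>c\<in>B. \<Sum>c'\<in>B. h c c'))"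
    unfolding C(1) using C(2,3) fB by (simp add: sum.union_disjoint sum.distrib)
  also have "(\<Sum>c\<in>Bs. \<Sum>c'\<in>B. h c c') = (\<Sum>c\<in>B. \<Sum>c'\<in>Bs. h c c')"
    by (subst sum.swap) (simp add: h_def nd_sym)
  also have "(\<Sum>c\<in>B. \<Sum>c'\<in>Bs. h c c') = (\<Sum>c\<in>B. r q e (phi M B c))"
    unfolding h_def using inner by simp
  also have "(\<Sum>c\<in>Bs. \<Sum>c'\<in>Bs. h c c') = (\<Sum>c\<in>Bs. r q e (phi M B c))"
    unfolding h_def using inner by simp
  also have "\<dots> = K q e"
    unfolding K_def r_def using sum.reindex_bij_betw[OF bij, of "\<lambda>k. \<Sum>l\<in>{0..e}. q ^ nd k l"] by simp
  finally show ?thesis unfolding h_def e_def by simp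
qed

lemma geo_base:
  fixes q :: real
  shows "(1 - q) * (\<Sum>l\<in>{0..k}. q ^ (k - l)) = 1 - q ^ Suc k"
proof (induction k)
  case 0 then show ?case by simp
next
  case (Suc k)
  define S where "S = (\<Sum>l\<in>{0..k}. q ^ (k - l))"
  have "(\<Sum>l\<in>{0..Suc k}. q ^ (Suc k - l)) = q * S + 1"
    unfolding S_def by (simp add: sum_distrib_left Suc_diff_le power_Suc[symmetric] del: power_Suc)
  moreover have "(1 - q) * (q * S + 1) = q * ((1 - q) * S) + (1 - q)"
    by (simp add: algebra_simps)
  moreover have "q * ((1 - q) * S) + (1 - q) = q * (1 - q ^ Suc k) + (1 - q)"
    using Suc unfolding S_def by simp
  moreover have "q * (1 - q ^ Suc k) + (1 - q) = 1 - q ^ Suc (Suc k)"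
    by (simp add: algebra_simps)
  ultimately show ?case by simp
qed

lemma r_closed:
  fixes q :: real
  assumes "k \<le> e"
  shows "(1 - q) * r q e k = 1 + q - q ^ Suc k - q ^ (e - k + 1)"
  using assms
proof (induction e rule: dec_induct)
  case base
  have "r q k k = (\<Sum>l\<in>{0..k}. q ^ (k - l))"
    unfolding r_def nd_def by (intro sum.cong) auto
  then show ?case using geo_base[of q k] by simp
next
  case (step e)
  have "r q (Suc e) k = r q e k + q ^ (Suc e - k)"
    unfolding r_def nd_def using step by simp
  moreover have "Suc e - k = e - k + 1" "Suc e - k + 1 = e - k + 2" using step by auto
  ultimately show ?case using step by (simp add: algebra_simps)
qed

lemma aux_pow:
  fixes q :: real
  assumes "0 \<le> q" "q \<le> 1"
  shows "q ^ d + q ^ (d + 1) \<le> 1 + q ^ (2 * d + 1)"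
proof -
  have ge: "0 \<le> (1 - q ^ d) * (1 - q ^ (d + 1))"
    using assms by (intro mult_nonneg_nonneg) (auto simp: power_le_one mult_le_one)
  have e: "2 * d + 1 = d + (d + 1)" by simp
  have pr: "q ^ d * q ^ (d + 1) = q ^ (2 * d + 1)"
    by (simp only: e power_add)
  have "(1 - q ^ d) * (1 - q ^ (d + 1)) = 1 - q ^ d - q ^ (d + 1) + q ^ d * q ^ (d + 1)"
    by (simp only: algebra_simps)
  then show ?thesis using ge pr by linarith
qed

lemma r_max:
  fixes q :: real
  assumes "0 \<le> q" "q < 1" "1 \<le> L" "k \<le> 2 * L - 1"
  shows "r q (2 * L - 1) k \<le> r q (2 * L - 1) L"
proof -
  have key: "q ^ L + q ^ (L + 1) \<le> q ^ Suc k + q ^ (2 * L - 1 - k + 1)"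
  proof (cases "k < L")
    case True
    then obtain d where d: "L = k + 1 + d" by (metis add_Suc less_iff_Suc_add add.commute plus_1_eq_Suc)
    have "q ^ Suc k * (q ^ d + q ^ (d + 1)) \<le> q ^ Suc k * (1 + q ^ (2 * d + 1))"
      using aux_pow[of q d] assms by (intro mult_left_mono) auto
    moreover have "2 * L - 1 - k + 1 = Suc k + (2 * d + 1)" using d by simp
    ultimately show ?thesis using d by (simp add: algebra_simps power_add)
  next
    case False
    then obtain d where d: "k = L + d" using le_Suc_ex by (metis not_less)
    have "q ^ (L - d) * (q ^ d + q ^ (d + 1)) \<le> q ^ (L - d) * (1 + q ^ (2 * d + 1))"
      using aux_pow[of q d] assms by (intro mult_left_mono) auto
    moreover have "d \<le> L" using d assms by simp
    moreover have "2 * L - 1 - k + 1 = L - d" using d assms by simp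
    ultimately show ?thesis using d
      by (simp add: algebra_simps power_add[symmetric])
  qed
  have A: "(1 - q) * r q (2 * L - 1) k = 1 + q - q ^ Suc k - q ^ (2 * L - 1 - k + 1)"
    using r_closed[of k "2 * L - 1" q] assms by simp
  have B: "(1 - q) * r q (2 * L - 1) L = 1 + q - q ^ Suc L - q ^ (2 * L - 1 - L + 1)"
    using r_closed[of L "2 * L - 1" q] assms by simp
  have "2 * L - 1 - L + 1 = L" using assms by simp
  then have "(1 - q) * r q (2 * L - 1) k \<le> (1 - q) * r q (2 * L - 1) L"
    using A B key by simp
  then show ?thesis using assms by simp
qed

lemma G_W:
  assumes "B \<subseteq> {1..M}"
  shows "2 * G q B (Suc M) = (\<Sum>c\<in>{0..M}. \<Sum>c'\<in>{0..M}. q ^ nd (phi M B c) (phi M B c')) + (M + 1)"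
proof -
  have "(\<Sum>c\<in>{0..M}. \<Sum>c'\<in>{0..M}. q ^ nd (phi M B c) (phi M B c')) =
     2 * (\<Sum>c'\<in>{0..M}. \<Sum>c\<in>{0..c'}. q ^ nd (phi M B c) (phi M B c')) - (\<Sum>c\<in>{0..M}. q ^ nd (phi M B c) (phi M B c))"
    by (rule sym_sum) (simp add: nd_sym)
  moreover have "(\<Sum>c\<in>{0..M}. q ^ nd (phi M B c) (phi M B c)) = M + 1"
    by (simp add: nd_def)
  ultimately show ?thesis using G_cut[OF assms, of q] by simp
qed

lemma single_user:
  fixes q :: real
  assumes q: "0 \<le> q" "q < 1" and L: "1 \<le> L" and T: "T = 2 * L + m"
    and B: "B \<subseteq> {1..T - 1}" "card B = m"
  shows "G q B T \<le> G q {L + 1..L + m} T"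
proof -
  define M where "M = T - 1"
  have TM: "T = Suc M" unfolding M_def using T L by simp
  define Bb where "Bb = {L + 1..L + m}"
  have BM: "B \<subseteq> {1..M}" using B unfolding M_def by simp
  have BbM: "Bb \<subseteq> {1..M}" unfolding Bb_def M_def using T L by auto
  have cBb: "card Bb = m" unfolding Bb_def by simp
  have e: "M - m = 2 * L - 1" unfolding M_def using T L by simp
  have q1: "q ^ n \<le> 1" for n using q by (simp add: power_le_one)
  have fB: "finite B" by (rule finite_subset[OF BM]) simp
  have phile: "phi M B c \<le> M - m" for c
  proof -
    have "phi M B c \<le> card ({1..M} - B)" unfolding phi_def
      using card_mono[of "{1..M} - B" "({1..M} - B) \<inter> {1..c}"] by auto
    also have "\<dots> = M - m" using BM fB B(2) by (simp add: card_Diff_subset)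
    finally show ?thesis .
  qed
  have WB: "(\<Sum>c\<in>{0..M}. \<Sum>c'\<in>{0..M}. q ^ nd (phi M B c) (phi M B c')) \<le>
      K q (2 * L - 1) + 2 * (m * r q (2 * L - 1) L) + m * m"
  proof -
    have s1: "(\<Sum>c\<in>B. r q (2 * L - 1) (phi M B c)) \<le> m * r q (2 * L - 1) L"
      using sum_bounded_above[of B "\<lambda>c. r q (2 * L - 1) (phi M B c)" "r q (2 * L - 1) L"]
        r_max[OF q L] phile e B(2) by auto
    have s2: "(\<Sum>c\<in>B. \<Sum>c'\<in>B. q ^ nd (phi M B c) (phi M B c')) \<le> m * m"
    proof -
      have "(\<Sum>c'\<in>B. q ^ nd (phi M B c) (phi M B c')) \<le> m" for c
        using sum_bounded_above[of B "\<lambda>c'. q ^ nd (phi M B c) (phi M B c')" 1] q1 B(2) by auto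
      then show ?thesis
        using sum_bounded_above[of B "\<lambda>c. \<Sum>c'\<in>B. q ^ nd (phi M B c) (phi M B c')" m] B(2) by auto
    qed
    show ?thesis using W_decomp[OF BM, of q] s1 s2 B(2) e by simp
  qed
  have phiBb: "phi M Bb c = L" if "c \<in> Bb" for c
  proof -
    have "({1..M} - Bb) \<inter> {1..c} = {1..L}" using that unfolding Bb_def M_def using T L by auto
    then show ?thesis unfolding phi_def by simp
  qed
  have WBb: "(\<Sum>c\<in>{0..M}. \<Sum>c'\<in>{0..M}. q ^ nd (phi M Bb c) (phi M Bb c')) =
      K q (2 * L - 1) + 2 * (m * r q (2 * L - 1) L) + m * m"
  proof -
    have "(\<Sum>c\<in>Bb. r q (2 * L - 1) (phi M Bb c)) = m * r q (2 * L - 1) L"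
      using phiBb cBb by simp
    moreover have "(\<Sum>c\<in>Bb. \<Sum>c'\<in>Bb. q ^ nd (phi M Bb c) (phi M Bb c')) = m * m"
      using phiBb cBb by (simp add: nd_def)
    ultimately show ?thesis using W_decomp[OF BbM, of q] cBb e by simp
  qed
  have "2 * G q B T \<le> 2 * G q Bb T"
    using G_W[OF BM, of q] G_W[OF BbM, of q] WB WBb TM by simp
  then show ?thesis unfolding Bb_def by simp
qed

lemma G_mono:
  fixes q :: real
  assumes "0 \<le> q" "q \<le> 1" "B \<subseteq> B'"
  shows "G q B T \<le> G q B' T"
  unfolding G_def
proof (intro sum_mono)
  fix t a
  have "card ({a..<t} - B') \<le> card ({a..<t} - B)" using assms(3) by (intro card_mono) auto
  then show "q ^ card ({a..<t} - B) \<le> q ^ card ({a..<t} - B')"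
    using assms by (intro power_decreasing) auto
qed

lemma G_restrict: "G q B T = G q (B \<inter> {1..T - 1}) T"
  unfolding G_def
proof (intro sum.cong refl)
  fix t a assume "t \<in> {1..T}" "a \<in> {1..t}"
  then have "{a..<t} - B = {a..<t} - (B \<inter> {1..T - 1})" by auto
  then show "q ^ card ({a..<t} - B) = q ^ card ({a..<t} - (B \<inter> {1..T - 1}))" by simp
qed

lemma single_user_le:
  fixes q :: real
  assumes q: "0 \<le> q" "q < 1" and L: "1 \<le> L" and T: "T = 2 * L + m"
    and B: "B \<subseteq> {1..T - 1}" "card B \<le> m"
  shows "G q B T \<le> G q {L + 1..L + m} T"
proof -
  have fB: "finite B" by (rule finite_subset[OF B(1)]) simp
  have "card ({1..T - 1} - B) = T - 1 - card B" using B(1) fB by (simp add: card_Diff_subset)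
  then have "m - card B \<le> card ({1..T - 1} - B)" using T L by simp
  then obtain D where D: "D \<subseteq> {1..T - 1} - B" "card D = m - card B" "finite D"
    by (rule obtain_subset_with_card_n)
  have "card (B \<union> D) = m" using D fB B(2) by (subst card_Un_disjoint) auto
  moreover have "B \<union> D \<subseteq> {1..T - 1}" using D B by auto
  ultimately have "G q (B \<union> D) T \<le> G q {L + 1..L + m} T"
    by (intro single_user[OF q L T]) auto
  moreover have "G q B T \<le> G q (B \<union> D) T" using q by (intro G_mono) auto
  ultimately show ?thesis by simp
qed

lemma supermod2:
  fixes q :: real
  assumes q: "0 \<le> q" "q \<le> 1" and dj: "B1 \<inter> B2 = {}"
  shows "G q B1 T + G q B2 T \<le> G q (B1 \<union> B2) T + G q {} T"
proof -
  have "q ^ card ({a..<t} - B1) + q ^ card ({a..<t} - B2) \<le> q ^ card ({a..<t} - (B1 \<union> B2)) + q ^ card ({a..<t} - {})"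
    for a t :: nat
  proof -
    define I where "I = {a..<t}"
    define x where "x = card (I - (B1 \<union> B2))"
    define y1 where "y1 = card (I \<inter> B1)"
    define y2 where "y2 = card (I \<inter> B2)"
    have fI: "finite I" unfolding I_def by simp
    have c1: "card (I - B1) = x + y2" unfolding x_def y2_def
      using fI dj by (subst card_Un_disjoint[symmetric]) (auto intro: arg_cong[where f=card])
    have c2: "card (I - B2) = x + y1" unfolding x_def y1_def
      using fI dj by (subst card_Un_disjoint[symmetric]) (auto intro: arg_cong[where f=card])
    have c0: "card (I - {}) = x + y1 + y2" unfolding x_def y1_def y2_def
      using fI dj by (subst card_Un_disjoint[symmetric], simp, simp, blast,
            subst card_Un_disjoint[symmetric]) (auto intro: arg_cong[where f=card])
    have ge: "0 \<le> (1 - q ^ y1) * (1 - q ^ y2)"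
      using q by (intro mult_nonneg_nonneg) (auto simp: power_le_one)
    have "(1 - q ^ y1) * (1 - q ^ y2) = 1 - q ^ y1 - q ^ y2 + q ^ y1 * q ^ y2"
      by (simp only: algebra_simps)
    then have "q ^ y1 + q ^ y2 \<le> 1 + q ^ y1 * q ^ y2" using ge by linarith
    then have "q ^ x * (q ^ y1 + q ^ y2) \<le> q ^ x * (1 + q ^ y1 * q ^ y2)"
      using q by (intro mult_left_mono) auto
    then show ?thesis unfolding I_def[symmetric] c1 c2 c0 x_def[symmetric]
      by (simp add: power_add algebra_simps)
  qed
  then show ?thesis unfolding G_def by (simp add: sum.distrib[symmetric] sum_mono)
qed

lemma supermod:
  fixes q :: real
  assumes q: "0 \<le> q" "q \<le> 1"
  shows "(\<forall>i<n. \<forall>j<n. i \<noteq> j \<longrightarrow> B i \<inter> B j = {}) \<Longrightarrow>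
    (\<Sum>i<n. G q (B i) T) + G q {} T \<le> G q (\<Union>i<n. B i) T + real n * G q {} T"
proof (induction n)
  case 0 then show ?case by simp
next
  case (Suc n)
  have IH: "(\<Sum>i<n. G q (B i) T) + G q {} T \<le> G q (\<Union>i<n. B i) T + real n * G q {} T"
    using Suc by auto
  have "(\<Union>i<n. B i) \<inter> B n = {}"
  proof (rule ccontr)
    assume "(\<Union>i<n. B i) \<inter> B n \<noteq> {}"
    then obtain i x where "i < n" "x \<in> B i" "x \<in> B n" by blast
    moreover have "B i \<inter> B n = {}" using Suc.prems \<open>i < n\<close> by simp
    ultimately show False by blast
  qed
  then have "G q (\<Union>i<n. B i) T + G q (B n) T \<le> G q ((\<Union>i<n. B i) \<union> B n) T + G q {} T"
    by (rule supermod2[OF q])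
  moreover have "(\<Union>i<Suc n. B i) = (\<Union>i<n. B i) \<union> B n" by (auto simp: lessThan_Suc)
  ultimately show ?case using IH by (simp add: algebra_simps)
qed



lemma age_sum:
  "real (age u \<sigma> i (Suc t)) = (\<Sum>a\<in>{1..Suc t}. of_bool (\<forall>s\<in>{a..<Suc t}. \<not> (u s = i \<and> \<sigma> i s)))"
proof (induction t)
  case 0 then show ?case by simp
next
  case (Suc t)
  let ?P = "\<lambda>a. \<forall>s\<in>{a..<Suc t}. \<not> (u s = i \<and> \<sigma> i s)"
  let ?Q = "\<lambda>a. \<forall>s\<in>{a..<Suc (Suc t)}. \<not> (u s = i \<and> \<sigma> i s)"
  have split: "(\<Sum>a\<in>{1..Suc (Suc t)}. of_bool (?Q a) :: real) = (\<Sum>a\<in>{1..Suc t}. of_bool (?Q a)) + 1"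
    by simp
  have Q: "?Q a \<longleftrightarrow> ?P a \<and> \<not> (u (Suc t) = i \<and> \<sigma> i (Suc t))" if "a \<in> {1..Suc t}" for a
    using that by (auto simp: less_Suc_eq)
  show ?case
  proof (cases "u (Suc t) = i \<and> \<sigma> i (Suc t)")
    case True
    then have "(\<Sum>a\<in>{1..Suc t}. of_bool (?Q a) :: real) = 0"
      using Q by (intro sum.neutral) auto
    then show ?thesis using True split by simp
  next
    case False
    then have "(\<Sum>a\<in>{1..Suc t}. of_bool (?Q a) :: real) = (\<Sum>a\<in>{1..Suc t}. of_bool (?P a))"
      using Q by (intro sum.cong) auto
    then show ?thesis using False split Suc by simp
  qed
qed

lemma prob_window:
  assumes "1 \<le> a" "t \<le> T"
  shows "measure_pmf.prob (sched T p) {u. \<forall>s\<in>{a..<t}. \<not> (u s = i \<and> \<sigma> i s)}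
       = (\<Prod>s\<in>{a..<t}. if \<sigma> i s then 1 - pmf p i else 1)"
proof -
  let ?X = "\<lambda>s. if s \<in> {a..<t} then {x. \<not> (x = i \<and> \<sigma> i s)} else UNIV"
  have "{u. \<forall>s\<in>{a..<t}. \<not> (u s = i \<and> \<sigma> i s)} = Pi {1..T} ?X"
    using assms by (auto simp: Pi_def)
  then have "measure_pmf.prob (sched T p) {u. \<forall>s\<in>{a..<t}. \<not> (u s = i \<and> \<sigma> i s)}
       = (\<Prod>s\<in>{1..T}. measure_pmf.prob p (?X s))"
    unfolding sched_def by (simp add: measure_Pi_pmf_Pi)
  also have "\<dots> = (\<Prod>s\<in>{1..T}. if s \<in> {a..<t} then measure_pmf.prob p {x. \<not> (x = i \<and> \<sigma> i s)} else 1)"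
    by (intro prod.cong) auto
  also have "\<dots> = (\<Prod>s\<in>{1..T} \<inter> {a..<t}. measure_pmf.prob p {x. \<not> (x = i \<and> \<sigma> i s)})"
    by (rule prod.inter_restrict[symmetric]) simp
  also have "{1..T} \<inter> {a..<t} = {a..<t}" using assms by auto
  also have "(\<Prod>s\<in>{a..<t}. measure_pmf.prob p {x. \<not> (x = i \<and> \<sigma> i s)}) =
        (\<Prod>s\<in>{a..<t}. if \<sigma> i s then 1 - pmf p i else 1)"
  proof (intro prod.cong refl)
    fix s
    show "measure_pmf.prob p {x. \<not> (x = i \<and> \<sigma> i s)} = (if \<sigma> i s then 1 - pmf p i else 1)"
    proof (cases "\<sigma> i s")
      case True
      then have "{x. \<not> (x = i \<and> \<sigma> i s)} = space (measure_pmf p) - {i}" by auto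
      moreover have "measure_pmf.prob p (space (measure_pmf p) - {i}) = 1 - measure_pmf.prob p {i}"
        by (rule measure_pmf.prob_compl) simp
      ultimately show ?thesis using True
        by (simp add: measure_pmf_single)
    next
      case False
      then show ?thesis by simp
    qed
  qed
  finally show ?thesis .
qed

lemma expect_age:
  assumes "t \<in> {1..T}"
  shows "measure_pmf.expectation (sched T p) (\<lambda>u. real (age u \<sigma> i t)) =
      (\<Sum>a\<in>{1..t}. (1 - pmf p i) ^ card ({a..<t} - {s. \<not> \<sigma> i s}))"
proof -
  obtain t' where t': "t = Suc t'" using assms by (cases t) auto
  let ?M = "measure_pmf (sched T p)"
  let ?A = "\<lambda>a. {u. \<forall>s\<in>{a..<t}. \<not> (u s = i \<and> \<sigma> i s)}"
  have "measure_pmf.expectation (sched T p) (\<lambda>u. real (age u \<sigma> i t)) =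
        measure_pmf.expectation (sched T p) (\<lambda>u. \<Sum>a\<in>{1..t}. indicator (?A a) u)"
    unfolding t' age_sum by (simp add: indicator_def of_bool_def)
  also have "\<dots> = (\<Sum>a\<in>{1..t}. measure_pmf.expectation (sched T p) (indicator (?A a)))"
  proof -
    have "integrable ?M (indicator (?A a) :: _ \<Rightarrow> real)" for a
      by (auto intro!: integrable_real_indicator simp: measure_pmf.emeasure_finite less_top[symmetric])
    then show ?thesis using Bochner_Integration.integral_sum[of "{1..t}" "?M" "\<lambda>a. indicator (?A a)"] by simp
  qed
  also have "\<dots> = (\<Sum>a\<in>{1..t}. measure_pmf.prob (sched T p) (?A a))"
    by simp
  also have "\<dots> = (\<Sum>a\<in>{1..t}. (\<Prod>s\<in>{a..<t}. if \<sigma> i s then 1 - pmf p i else 1))"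
    using assms by (intro sum.cong refl prob_window) auto
  also have "\<dots> = (\<Sum>a\<in>{1..t}. (1 - pmf p i) ^ card ({a..<t} - {s. \<not> \<sigma> i s}))"
  proof (intro sum.cong refl)
    fix a
    have "(\<Prod>s\<in>{a..<t}. if \<sigma> i s then 1 - pmf p i else 1) = (\<Prod>s\<in>{a..<t} \<inter> {s. \<sigma> i s}. 1 - pmf p i)"
      by (subst prod.inter_restrict) auto
    also have "{a..<t} \<inter> {s. \<sigma> i s} = {a..<t} - {s. \<not> \<sigma> i s}" by auto
    finally show "(\<Prod>s\<in>{a..<t}. if \<sigma> i s then 1 - pmf p i else 1) = (1 - pmf p i) ^ card ({a..<t} - {s. \<not> \<sigma> i s})"
      by simp
  qed
  finally show ?thesis .
qed

lemma payoff_G: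
  "payoff N T p \<sigma> = (1 / (real T * real N)) * (\<Sum>i<N. G (1 - pmf p i) {s. \<not> \<sigma> i s} T)"
proof -
  have "payoff N T p \<sigma> = (1 / real T) * (\<Sum>t\<in>{1..T}. (1 / real N) *
        (\<Sum>i<N. \<Sum>a\<in>{1..t}. (1 - pmf p i) ^ card ({a..<t} - {s. \<not> \<sigma> i s})))"
    unfolding payoff_def by (intro arg_cong2[where f="(*)"] refl sum.cong) (auto simp: expect_age)
  also have "\<dots> = (1 / (real T * real N)) * (\<Sum>i<N. G (1 - pmf p i) {s. \<not> \<sigma> i s} T)"
    unfolding G_def by (simp add: sum_distrib_left, rule sum.swap)
  finally show ?thesis .
qed



lemma sum_single:
  fixes h :: "nat \<Rightarrow> real"
  assumes "j < N" "\<And>i. i < N \<Longrightarrow> i \<noteq> j \<Longrightarrow> h i = b"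
  shows "(\<Sum>i<N. h i) = h j + real (N - 1) * b"
proof -
  have "(\<Sum>i<N. h i) = h j + (\<Sum>i\<in>{..<N} - {j}. h i)"
    using assms(1) by (subst sum.remove[of _ j]) auto
  also have "(\<Sum>i\<in>{..<N} - {j}. h i) = (\<Sum>i\<in>{..<N} - {j}. b)"
    using assms(2) by (intro sum.cong) auto
  also have "\<dots> = real (N - 1) * b" using assms(1) by simp
  finally show ?thesis .
qed

lemma pow_jensen:
  fixes x :: "nat \<Rightarrow> real"
  assumes N: "N \<ge> 1" and x: "\<And>i. i < N \<Longrightarrow> 0 \<le> x i" and s: "(\<Sum>i<N. x i) = real N * c"
  shows "real N * c ^ n \<le> (\<Sum>i<N. x i ^ n)"
proof -
  have cv: "convex_on {0::real..} (\<lambda>x. x ^ n)"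
  proof (cases "even n")
    case True
    then show ?thesis using convex_power_even convex_on_subset by blast
  next
    case False
    then show ?thesis using convex_power_odd by blast
  qed
  have "(\<lambda>x. x ^ n) (\<Sum>i<N. (1 / real N) *\<^sub>R x i) \<le> (\<Sum>i<N. (1 / real N) * (x i ^ n))"
    using N x by (intro convex_on_sum[OF _ _ cv]) (auto simp: lessThan_empty_iff)
  moreover have "(\<Sum>i<N. (1 / real N) *\<^sub>R x i) = c"
  proof -
    have "(\<Sum>i<N. (1 / real N) *\<^sub>R x i) = (1 / real N) * (\<Sum>i<N. x i)"
      by (simp add: sum_distrib_left)
    then show ?thesis using s N by simp
  qed
  ultimately have "c ^ n \<le> (1 / real N) * (\<Sum>i<N. x i ^ n)"
    by (simp add: sum_distrib_left)
  then show ?thesis using N by (simp add: field_simps)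
qed

lemma G_jensen:
  fixes x :: "nat \<Rightarrow> real"
  assumes N: "N \<ge> 1" and x: "\<And>i. i < N \<Longrightarrow> 0 \<le> x i" and s: "(\<Sum>i<N. x i) = real N * c"
  shows "real N * G c B T \<le> (\<Sum>i<N. G (x i) B T)"
proof -
  have "real N * G c B T = (\<Sum>t\<in>{1..T}. \<Sum>a\<in>{1..t}. real N * c ^ card ({a..<t} - B))"
    unfolding G_def by (simp add: sum_distrib_left)
  also have "\<dots> \<le> (\<Sum>t\<in>{1..T}. \<Sum>a\<in>{1..t}. \<Sum>i<N. x i ^ card ({a..<t} - B))"
    by (intro sum_mono pow_jensen[OF N x s]) auto
  also have "\<dots> = (\<Sum>i<N. G (x i) B T)"
    unfolding G_def by (simp add: sum.swap[of _ "{..<N}"])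
  finally show ?thesis .
qed

lemma blocked_bar:
  assumes L: "real L = (1 - \<alpha>) * real T / 2" and m: "real m = \<alpha> * real T"
  shows "{s. \<not> sigma_bar T \<alpha> j i s} = (if i = j then {L + 1..L + m} else {})"
proof -
  have e1: "(1 - \<alpha>) * real T / 2 + 1 = real (L + 1)" using L by simp
  have e2: "(1 + \<alpha>) * real T / 2 = real (L + m)" using L m by (simp add: algebra_simps)
  show ?thesis unfolding sigma_bar_def e1 e2 of_nat_le_iff by auto
qed

lemma bdd_payoff:
  assumes "set_pmf p \<subseteq> {..<N}"
  shows "bdd_above {payoff N T p \<sigma> | \<sigma>. feasible N T \<alpha> \<sigma>}"
proof (rule bdd_aboveI)
  fix y assume "y \<in> {payoff N T p \<sigma> | \<sigma>. feasible N T \<alpha> \<sigma>}"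
  then obtain \<sigma> where y: "y = payoff N T p \<sigma>" by auto
  have "(\<Sum>i<N. G (1 - pmf p i) {s. \<not> \<sigma> i s} T) \<le> (\<Sum>i<N. G (1 - pmf p i) UNIV T)"
    by (intro sum_mono G_mono) (auto simp: pmf_le_1)
  then have "(1 / (real T * real N)) * (\<Sum>i<N. G (1 - pmf p i) {s. \<not> \<sigma> i s} T)
      \<le> (1 / (real T * real N)) * (\<Sum>i<N. G (1 - pmf p i) UNIV T)"
    by (intro mult_left_mono) auto
  then show "y \<le> (1 / (real T * real N)) * (\<Sum>i<N. G (1 - pmf p i) UNIV T)"
    unfolding y payoff_G .
qed

theorem theorem7:
  fixes N :: nat and \<alpha> :: real
  assumes "N \<ge> 2" and "0 < \<alpha>" and "\<alpha> < 1"
  shows "\<exists>T0. \<forall>T \<ge> T0. \<forall>j < N.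
           (\<alpha> * real T \<in> \<int> \<and> (\<exists>k::int. (1 - \<alpha>) * real T = 2 * of_int k)) \<longrightarrow>
             feasible N T \<alpha> (sigma_bar T \<alpha> j)
           \<and> (\<forall>\<sigma>. feasible N T \<alpha> \<sigma> \<longrightarrow>
                  payoff N T (uniform_pmf N) \<sigma> \<le> payoff N T (uniform_pmf N) (sigma_bar T \<alpha> j))
           \<and> (\<forall>p. set_pmf p \<subseteq> {..<N} \<longrightarrow>
                  worst_payoff N T \<alpha> (uniform_pmf N) \<le> worst_payoff N T \<alpha> p)"
proof (intro exI[of _ 1] allI impI)
  fix T j :: nat
  assume T1: "1 \<le> T" and jN: "j < N"
  assume hyp: "\<alpha> * real T \<in> \<int> \<and> (\<exists>k::int. (1 - \<alpha>) * real T = 2 * of_int k)"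
  obtain z :: int where z: "\<alpha> * real T = of_int z" using hyp Ints_cases by metis
  obtain k :: int where k: "(1 - \<alpha>) * real T = 2 * of_int k" using hyp by blast
  have zpos: "0 \<le> z" using z assms T1 by (metis of_int_0_le_iff mult_nonneg_nonneg less_imp_le of_nat_0_le_iff)
  have kpos: "1 \<le> k"
  proof -
    have "0 < (1 - \<alpha>) * real T" using assms T1 by simp
    then have "0 < k" using k by simp
    then show ?thesis by simp
  qed
  define m where "m = nat z"
  define L where "L = nat k"
  have m: "real m = \<alpha> * real T" unfolding m_def using z zpos by simp
  have L: "real L = (1 - \<alpha>) * real T / 2" unfolding L_def using k kpos by simp
  have L1: "1 \<le> L" unfolding L_def using kpos by simp
  have TLm: "T = 2 * L + m"
  proof -
    have "real T = real (2 * L + m)" using m L by (simp add: algebra_simps)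
    then show ?thesis by (simp only: of_nat_eq_iff)
  qed
  define Bb where "Bb = {L + 1..L + m}"
  have blk: "{s. \<not> sigma_bar T \<alpha> j' i s} = (if i = j' then Bb else {})" for j' i
    unfolding Bb_def by (rule blocked_bar[OF L m])
  have N1: "1 \<le> N" using assms by simp
  define q where "q = 1 - 1 / real N"
  have q: "0 \<le> q" "q < 1" unfolding q_def using N1 by (auto simp: field_simps)

  have feas: "feasible N T \<alpha> (sigma_bar T \<alpha> j')" if "j' < N" for j'
  proof -
    have "{(i, t). i < N \<and> t \<in> {1..T} \<and> \<not> sigma_bar T \<alpha> j' i t} = {j'} \<times> Bb"
    proof -
      have "\<not> sigma_bar T \<alpha> j' i t \<longleftrightarrow> i = j' \<and> t \<in> Bb" for i t
        using blk[of j' i] by (auto split: if_splits)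
      then show ?thesis using that TLm unfolding Bb_def by auto
    qed
    then have c1: "card {(i, t). i < N \<and> t \<in> {1..T} \<and> \<not> sigma_bar T \<alpha> j' i t} = m"
      unfolding Bb_def by (simp add: card_cartesian_product)
    have c2: "card {i. i < N \<and> \<not> sigma_bar T \<alpha> j' i t} \<le> 1" for t
    proof -
      have "{i. i < N \<and> \<not> sigma_bar T \<alpha> j' i t} \<subseteq> {j'}"
      proof
        fix x assume "x \<in> {i. i < N \<and> \<not> sigma_bar T \<alpha> j' i t}"
        then have "t \<in> {s. \<not> sigma_bar T \<alpha> j' x s}" by simp
        then show "x \<in> {j'}" unfolding blk[of j' x] by (auto split: if_splits)
      qed
      then show ?thesis using card_mono[of "{j'}"] by fastforce
    qed
    show ?thesis unfolding feasible_def using c1 c2 m by simp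
  qed

  have pmfu: "pmf (uniform_pmf N) i = 1 / real N" if "i < N" for i
    using that N1 unfolding uniform_pmf_def by (subst pmf_of_set) auto
  have sumu: "(\<Sum>i<N. G (1 - pmf (uniform_pmf N) i) (B i) T) = (\<Sum>i<N. G q (B i) T)" for B
    using pmfu unfolding q_def by (intro sum.cong) auto

  define V where "V = (1 / (real T * real N)) * (G q Bb T + real (N - 1) * G q {} T)"
  have payu_bar: "payoff N T (uniform_pmf N) (sigma_bar T \<alpha> j') = V" if "j' < N" for j'
  proof -
    have "(\<Sum>i<N. G q {s. \<not> sigma_bar T \<alpha> j' i s} T) = G q Bb T + real (N - 1) * G q {} T"
      using that by (subst sum_single[of j']) (auto simp: blk)
    then show ?thesis unfolding payoff_G sumu V_def by simp
  qed

  have part2: "payoff N T (uniform_pmf N) \<sigma> \<le> V" if fs: "feasible N T \<alpha> \<sigma>" for \<sigma>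
  proof -
    define Bi where "Bi = (\<lambda>i. {s. \<not> \<sigma> i s} \<inter> {1..T - 1})"
    define P where "P = {(i, t). i < N \<and> t \<in> {1..T} \<and> \<not> \<sigma> i t}"
    have finP: "finite P" unfolding P_def
      by (rule finite_subset[of _ "{..<N} \<times> {1..T}"]) auto
    have cP: "card P \<le> m" using fs m unfolding feasible_def P_def by simp
    have UB: "(\<Union>i<N. Bi i) \<subseteq> snd ` P" unfolding Bi_def P_def by force
    have cU: "card (\<Union>i<N. Bi i) \<le> m"
      using card_mono[OF finite_imageI[OF finP] UB] card_image_le[OF finP, of snd] cP by linarith
    have Usub: "(\<Union>i<N. Bi i) \<subseteq> {1..T - 1}" unfolding Bi_def by auto
    have dj: "\<forall>i<N. \<forall>i'<N. i \<noteq> i' \<longrightarrow> Bi i \<inter> Bi i' = {}"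
    proof (intro allI impI)
      fix i i' assume ii: "i < N" "i' < N" "i \<noteq> i'"
      show "Bi i \<inter> Bi i' = {}"
      proof (rule ccontr)
        assume "Bi i \<inter> Bi i' \<noteq> {}"
        then obtain s where s: "s \<in> Bi i" "s \<in> Bi i'" by blast
        then have sT: "s \<in> {1..T}" unfolding Bi_def by auto
        have "{i, i'} \<subseteq> {x. x < N \<and> \<not> \<sigma> x s}" using s ii unfolding Bi_def by auto
        then have "card {i, i'} \<le> card {x. x < N \<and> \<not> \<sigma> x s}" by (intro card_mono) auto
        moreover have "card {x. x < N \<and> \<not> \<sigma> x s} \<le> 1" using fs sT unfolding feasible_def by auto
        ultimately show False using ii by simp
      qed
    qed
    have "(\<Sum>i<N. G q (Bi i) T) + G q {} T \<le> G q (\<Union>i<N. Bi i) T + real N * G q {} T"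
      by (rule supermod[OF q(1) less_imp_le[OF q(2)] dj])
    moreover have "G q (\<Union>i<N. Bi i) T \<le> G q Bb T"
      unfolding Bb_def by (rule single_user_le[OF q L1 TLm]) (use Usub cU TLm in auto)
    ultimately have "(\<Sum>i<N. G q (Bi i) T) \<le> G q Bb T + real (N - 1) * G q {} T"
      using N1 by (simp add: of_nat_diff algebra_simps)
    moreover have "(\<Sum>i<N. G q {s. \<not> \<sigma> i s} T) = (\<Sum>i<N. G q (Bi i) T)"
      unfolding Bi_def by (intro sum.cong refl) (rule G_restrict)
    ultimately have "(\<Sum>i<N. G q {s. \<not> \<sigma> i s} T) \<le> G q Bb T + real (N - 1) * G q {} T" by simp
    then show ?thesis unfolding payoff_G sumu V_def by (intro mult_left_mono) auto
  qed

  have ne: "{payoff N T p \<sigma> | \<sigma>. feasible N T \<alpha> \<sigma>} \<noteq> {}" for p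
    using feas[OF jN] by auto
  have wu: "worst_payoff N T \<alpha> (uniform_pmf N) \<le> V"
    unfolding worst_payoff_def by (rule cSup_least[OF ne]) (auto intro: part2)
  have part3: "worst_payoff N T \<alpha> (uniform_pmf N) \<le> worst_payoff N T \<alpha> p"
    if sp: "set_pmf p \<subseteq> {..<N}" for p
  proof -
    define x where "x = (\<lambda>i. 1 - pmf p i)"
    have x0: "0 \<le> x i" for i unfolding x_def by (simp add: pmf_le_1)
    have sx: "(\<Sum>i<N. x i) = real N * q"
    proof -
      have "(\<Sum>i<N. pmf p i) = 1" using sp by (intro sum_pmf_eq_1) auto
      then show ?thesis unfolding x_def q_def using N1 by (simp add: sum_subtractf field_simps)
    qed
    have pay: "payoff N T p (sigma_bar T \<alpha> j') = (1 / (real T * real N)) *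
        (\<Sum>i<N. G (x i) (if i = j' then Bb else {}) T)" for j'
      unfolding payoff_G x_def blk ..
    have "(\<Sum>j'<N. \<Sum>i<N. G (x i) (if i = j' then Bb else {}) T) =
          (\<Sum>i<N. \<Sum>j'<N. G (x i) (if i = j' then Bb else {}) T)"
      by (rule sum.swap)
    also have "\<dots> = (\<Sum>i<N. G (x i) Bb T + real (N - 1) * G (x i) {} T)"
    proof (intro sum.cong refl)
      fix i assume i: "i \<in> {..<N}"
      show "(\<Sum>j'<N. G (x i) (if i = j' then Bb else {}) T) = G (x i) Bb T + real (N - 1) * G (x i) {} T"
        using sum_single[of i N "\<lambda>j'. G (x i) (if i = j' then Bb else {}) T" "G (x i) {} T"] i by auto
    qed
    also have "\<dots> = (\<Sum>i<N. G (x i) Bb T) + real (N - 1) * (\<Sum>i<N. G (x i) {} T)"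
      by (simp add: sum.distrib sum_distrib_left)
    also have "\<dots> \<ge> real N * G q Bb T + real (N - 1) * (real N * G q {} T)"
      using G_jensen[OF N1 _ sx, of Bb T] G_jensen[OF N1 _ sx, of "{}" T] x0
      by (intro add_mono mult_left_mono) auto
    finally have S: "real N * (G q Bb T + real (N - 1) * G q {} T) \<le>
        (\<Sum>j'<N. \<Sum>i<N. G (x i) (if i = j' then Bb else {}) T)"
      by (simp add: algebra_simps)
    have "\<exists>j'<N. V \<le> payoff N T p (sigma_bar T \<alpha> j')"
    proof (rule ccontr)
      assume "\<not> ?thesis"
      then have lt: "payoff N T p (sigma_bar T \<alpha> j') < V" if "j' < N" for j'
        using that by auto
      have "(\<Sum>j'<N. payoff N T p (sigma_bar T \<alpha> j')) < (\<Sum>j'<N. V)"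
        using N1 by (intro sum_strict_mono lt) (auto simp: lessThan_empty_iff)
      moreover have "(\<Sum>j'<N. payoff N T p (sigma_bar T \<alpha> j')) =
          (1 / (real T * real N)) * (\<Sum>j'<N. \<Sum>i<N. G (x i) (if i = j' then Bb else {}) T)"
        unfolding pay by (simp add: sum_distrib_left)
      moreover have "(\<Sum>j'<N. V) = (1 / (real T * real N)) * (real N * (G q Bb T + real (N - 1) * G q {} T))"
        unfolding V_def by simp
      moreover have "(1 / (real T * real N)) * (real N * (G q Bb T + real (N - 1) * G q {} T)) \<le>
          (1 / (real T * real N)) * (\<Sum>j'<N. \<Sum>i<N. G (x i) (if i = j' then Bb else {}) T)"
        using S by (intro mult_left_mono) auto
      ultimately show False by linarith
    qed
    then obtain j' where j': "j' < N" "V \<le> payoff N T p (sigma_bar T \<alpha> j')" by blast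
    have "payoff N T p (sigma_bar T \<alpha> j') \<le> worst_payoff N T \<alpha> p"
      unfolding worst_payoff_def using feas[OF j'(1)]
      by (intro cSup_upper bdd_payoff[OF sp]) auto
    then show ?thesis using wu j' by linarith
  qed

  show "feasible N T \<alpha> (sigma_bar T \<alpha> j)
           \<and> (\<forall>\<sigma>. feasible N T \<alpha> \<sigma> \<longrightarrow>
                  payoff N T (uniform_pmf N) \<sigma> \<le> payoff N T (uniform_pmf N) (sigma_bar T \<alpha> j))
           \<and> (\<forall>p. set_pmf p \<subseteq> {..<N} \<longrightarrow>
                  worst_payoff N T \<alpha> (uniform_pmf N) \<le> worst_payoff N T \<alpha> p)"
    using feas[OF jN] part2 payu_bar[OF jN] part3 by auto
qed

end
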